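(* Consider the networked Cournot game defined in the context, with market maker payoff $\pi^M\in\{W_{soc},W_{res},W_{con}\}$, and assume it is feasible. (i) If $\pi^M=W_{soc}$, then a Generalized Nash Equilibrium (GNE) exists. (ii) If $\pi^M=W_{res}$, then a GNE exists. (iii) If $\pi^M=W_{con}$, a GNE need not exist: there exist a network and parameters for which the game has no GNE. An example is the 2-node network with $a_1=a_2=10$, $b_1=1.2$, $b_2=1$, $c_1=c_2=1$ and line capacity $f_{12}=2$.
   Context: Network model. There are $n$ nodes and $\ell$ transmission lines. Let $H\in\mathbb{R}^{\ell\times n}$ be the shift-factor matrix of a connected power network under the linearized DC power-flow model; the flows on the lines are $-Hr$ when the vector of power injections is $-r$. Let $f\in\mathbb{R}^\ell_{+}$ be the vector of line capacities. Generators. At each node $k$ there is a generator $G_k$. It chooses a quantity $q_k\in S^G_k=\mathbb{R}_+$ and incurs cost $c_kq_k^2$, where $c_k>0$. Demand and prices. Demand at node $k$ has inverse demand $p_k(d)=a_k-b_kd$, where $a_k>0$ and $b_k\ge 0$. Market maker. A market maker $M$ chooses re-balancing quantities $r\in\mathbb{R}^n$ from $$S^M(q)=\{r\in\mathbb{R}^n: q+r\ge 0,\ |Hr|\le f,\ \mathbf{1}^\top r=0\},$$ where inequalities are elementwise. Node $k$ then receives $d_k=q_k+r_k$, and both demand and generator at node $k$ face the price $p_k(q_k+r_k)$. Payoffs. Generator $k$'s profit is $\pi^G_k(q,r)=q_kp_k(q_k+r_k)-c_kq_k^2$. The market maker's payoff $\pi^M$ is one of: - $W_{soc}(q,r)=\sum_k\big(\int_0^{q_k+r_k}p_k(w)\,dw-c_kq_k^2\big)$;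 - $W_{res}(q,r)=\sum_k\big(\int_0^{q_k+r_k}p_k(w)\,dw-q_kp_k(q_k+r_k)\big)$; - $W_{con}(q,r)=\sum_k\big(\int_0^{q_k+r_k}p_k(w)\,dw-(q_k+r_k)p_k(q_k+r_k)\big)$. Feasibility. The game is feasible if there exists $q\in\mathbb{R}^n_+$ with $S^M(q)\neq\emptyset$. GNE. A pair $(q^*,r^* )$ is a GNE if $r^*\in S^M(q^* )$ and both of the following hold: - for every $k$ and every $q_k\ge 0$, $\pi^G_k(q_k^*,q_{-k}^*,r^* )\ge\pi^G_k(q_k,q^*_{-k},r^* )$; - for every $r\in S^M(q^* )$, $\pi^M(q^*,r^* )\ge \pi^M(q^*,r)$. 2-node network. Nodes 1 and 2 are joined by a single line of capacity $f_{12}$. Writing $r_1=r$ and $r_2=-r$, the market maker's feasible set becomes $\{r: -q_1\le r\le q_2,\ -f_{12}\le r\le f_{12}\}$. *)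

theory Defs
  imports "HOL-Analysis.Analysis" "HOL-Library.Numeral_Type"
begin

text \<open>Nodes are the elements of a finite type 'n, lines the elements of a finite type 'l.
  Vectors are functions on these types; H :: 'l => 'n => real is the shift-factor matrix.\<close>

text \<open>Shift-factor matrix of a connected power network (linearized DC model):
  each line e goes from node fr e to node to e (fr e ~= to e) and has susceptance beta e > 0;
  the graph is connected; for every vector of voltage angles theta, the induced line flows are
  beta e * (theta (fr e) - theta (to e)) and the induced nodal net injections are given by
  Kirchhoff's current law; H maps these injections to these flows.  (Since the graph is
  connected every balanced injection arises this way, so this determines H on balanced
  injections, which is all the game uses.)\<close>

definition dc_flow :: "('l \<Rightarrow> 'n) \<Rightarrow> ('l \<Rightarrow> 'n) \<Rightarrow> ('l \<Rightarrow> real) \<Rightarrow> ('n \<Rightarrow> real) \<Rightarrow> 'l \<Rightarrow> real" where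
  "dc_flow fr to \<beta> \<theta> e = \<beta> e * (\<theta> (fr e) - \<theta> (to e))"

definition dc_injection :: "('l::finite \<Rightarrow> 'n) \<Rightarrow> ('l \<Rightarrow> 'n) \<Rightarrow> ('l \<Rightarrow> real) \<Rightarrow> ('n \<Rightarrow> real) \<Rightarrow> 'n \<Rightarrow> real" where
  "dc_injection fr to \<beta> \<theta> k =
     (\<Sum>e\<in>UNIV. (if fr e = k then dc_flow fr to \<beta> \<theta> e else 0)
               - (if to e = k then dc_flow fr to \<beta> \<theta> e else 0))"

definition network_connected :: "('l \<Rightarrow> 'n) \<Rightarrow> ('l \<Rightarrow> 'n) \<Rightarrow> bool" where
  "network_connected fr to \<longleftrightarrow>
     (\<forall>i j. (\<lambda>x y. \<exists>e. (fr e = x \<and> to e = y) \<or> (fr e = y \<and> to e = x))\<^sup>*\<^sup>* i j)"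

definition shift_factor_matrix :: "('l::finite \<Rightarrow> 'n::finite \<Rightarrow> real) \<Rightarrow> bool" where
  "shift_factor_matrix H \<longleftrightarrow>
     (\<exists>fr to \<beta>. (\<forall>e. fr e \<noteq> to e) \<and> (\<forall>e. \<beta> e > 0) \<and> network_connected fr to \<and>
        (\<forall>\<theta> e. (\<Sum>k\<in>UNIV. H e k * dc_injection fr to \<beta> \<theta> k) = dc_flow fr to \<beta> \<theta> e))"

definition price :: "('n \<Rightarrow> real) \<Rightarrow> ('n \<Rightarrow> real) \<Rightarrow> 'n \<Rightarrow> real \<Rightarrow> real" where
  "price a b k d = a k - b k * d"

definition SM :: "('l::finite \<Rightarrow> 'n::finite \<Rightarrow> real) \<Rightarrow> ('l \<Rightarrow> real) \<Rightarrow> ('n \<Rightarrow> real) \<Rightarrow> ('n \<Rightarrow> real) set" where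
  "SM H f q = {r. (\<forall>k. q k + r k \<ge> 0) \<and> (\<forall>e. \<bar>\<Sum>k\<in>UNIV. H e k * r k\<bar> \<le> f e) \<and> (\<Sum>k\<in>UNIV. r k) = 0}"

definition piG :: "('n \<Rightarrow> real) \<Rightarrow> ('n \<Rightarrow> real) \<Rightarrow> ('n \<Rightarrow> real) \<Rightarrow> ('n \<Rightarrow> real) \<Rightarrow> ('n \<Rightarrow> real) \<Rightarrow> 'n \<Rightarrow> real" where
  "piG a b c q r k = q k * price a b k (q k + r k) - c k * (q k)\<^sup>2"

datatype mm_objective = Wsoc | Wres | Wcon

definition piM :: "mm_objective \<Rightarrow> ('n::finite \<Rightarrow> real) \<Rightarrow> ('n \<Rightarrow> real) \<Rightarrow> ('n \<Rightarrow> real) \<Rightarrow> ('n \<Rightarrow> real) \<Rightarrow> ('n \<Rightarrow> real) \<Rightarrow> real" where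
  "piM W a b c q r =
     (\<Sum>k\<in>UNIV. (LBINT w=ereal 0..ereal (q k + r k). price a b k w)
        - (case W of
             Wsoc \<Rightarrow> c k * (q k)\<^sup>2
           | Wres \<Rightarrow> q k * price a b k (q k + r k)
           | Wcon \<Rightarrow> (q k + r k) * price a b k (q k + r k)))"

definition game_feasible :: "('l::finite \<Rightarrow> 'n::finite \<Rightarrow> real) \<Rightarrow> ('l \<Rightarrow> real) \<Rightarrow> bool" where
  "game_feasible H f \<longleftrightarrow> (\<exists>q. (\<forall>k. q k \<ge> 0) \<and> SM H f q \<noteq> {})"

definition is_GNE :: "('l::finite \<Rightarrow> 'n::finite \<Rightarrow> real) \<Rightarrow> ('l \<Rightarrow> real) \<Rightarrow> ('n \<Rightarrow> real) \<Rightarrow> ('n \<Rightarrow> real) \<Rightarrow> ('n \<Rightarrow> real)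
    \<Rightarrow> mm_objective \<Rightarrow> ('n \<Rightarrow> real) \<Rightarrow> ('n \<Rightarrow> real) \<Rightarrow> bool" where
  "is_GNE H f a b c W q r \<longleftrightarrow>
     (\<forall>k. q k \<ge> 0) \<and> r \<in> SM H f q \<and>
     (\<forall>k x. x \<ge> 0 \<longrightarrow> piG a b c q r k \<ge> piG a b c (q(k := x)) r k) \<and>
     (\<forall>r' \<in> SM H f q. piM W a b c q r \<ge> piM W a b c q r')"

end

theory Submission imports Defs begin
lemma integ: "(LBINT w=ereal 0..ereal d. price a b k w) = a k * d - b k * d^2/2"
proof -
  have "(LBINT w=ereal 0..ereal d. (\<lambda>w. a k - b k * w) w) = (a k * d - b k * d^2/2) - (a k * 0 - b k * 0^2/2)"
    apply (rule interval_integral_FTC_finite)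
    apply (intro continuous_intros)
    apply (auto intro!: derivative_eq_intros simp: has_real_derivative_iff_has_vector_derivative[symmetric])
    done
  then show ?thesis by (simp add: price_def)
qed
lemma two0: "(2::2) = 0" by simp
lemma sum2: "sum f (UNIV::2 set) = f 0 + f 1" by (simp only: sum_2 two0 add.commute)

lemma quad:
  fixes A B x :: real
  assumes "B > 0" "x \<ge> 0"
  shows "x * A - B * x^2 \<le> max 0 (A/(2*B)) * A - B * (max 0 (A/(2*B)))^2"
proof (cases "A \<le> 0")
  case True
  then have "max 0 (A/(2*B)) = 0" using assms by (simp add: divide_nonpos_pos)
  moreover have "x * A \<le> 0" using True assms by (simp add: mult_nonneg_nonpos)
  moreover have "B * x^2 \<ge> 0" using assms by simp
  ultimately show ?thesis by simp
next
  case False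
  then have m: "max 0 (A/(2*B)) = A/(2*B)" using assms by simp
  have "max 0 (A/(2*B)) * A - B * (max 0 (A/(2*B)))^2 - (x * A - B * x^2) = (A - 2*B*x)^2/(4*B)"
    unfolding m using assms by (simp add: field_simps power2_eq_square)
  moreover have "(A - 2*B*x)^2/(4*B) \<ge> 0" using assms by simp
  ultimately show ?thesis by linarith
qed

lemma bounds:
  fixes a b c r :: real
  assumes "a > 0" "b \<ge> 0" "c > 0" "r \<ge> - a / (b + 2*c)"
  shows "0 \<le> max 0 ((a - b*r)/(2*(b+c))) + r" "max 0 ((a - b*r)/(2*(b+c))) \<le> a / (b + 2*c)"
proof -
  have p: "b + 2*c > 0" "b + c > 0" using assms by auto
  have r: "r * (b + 2*c) \<ge> - a" using assms(4) p by (simp add: field_simps)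
  show "0 \<le> max 0 ((a - b*r)/(2*(b+c))) + r"
  proof (cases "r \<ge> 0")
    case True then show ?thesis by simp
  next
    case False
    have "(a - b*r)/(2*(b+c)) + r = (a + r*(b+2*c))/(2*(b+c))" using p by (simp add: field_simps)
    also have "\<dots> \<ge> 0" using r p by simp
    finally show ?thesis by linarith
  qed
  have "(a - b*r)/(2*(b+c)) \<le> a / (b + 2*c)"
  proof -
    have "b * (a + r*(b+2*c)) \<ge> 0" using r assms by simp
    then have "(a - b*r) * (b + 2*c) \<le> a * (2*(b+c))" by (simp add: algebra_simps)
    then show ?thesis using p by (simp add: field_simps)
  qed
  moreover have "0 \<le> a / (b + 2*c)" using p assms by simp
  ultimately show "max 0 ((a - b*r)/(2*(b+c))) \<le> a / (b + 2*c)" by simp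
qed

lemma piG_eq: "piG a b c q r k = q k * (a k - b k * r k) - (b k + c k) * (q k)^2"
  by (simp add: piG_def price_def power2_eq_square algebra_simps)

lemma piM_soc: "piM Wsoc a b c q r =
  (\<Sum>k\<in>UNIV. q k * (a k - b k * r k) - (b k + c k) * (q k)^2 + (a k * r k - b k * (r k)^2/2) + b k * (q k)^2/2)"
  unfolding piM_def integ by (rule sum.cong) (simp_all add: price_def power2_eq_square field_simps)

lemma piM_res: "piM Wres a b c q r =
  (\<Sum>k\<in>UNIV. (a k * r k - b k * (r k)^2/2) + b k * (q k)^2/2)"
  unfolding piM_def integ by (rule sum.cong) (simp_all add: price_def power2_eq_square field_simps)

lemma piM_con: "piM Wcon a b c q r = (\<Sum>k\<in>UNIV. b k * (q k + r k)^2/2)"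
  unfolding piM_def integ by (rule sum.cong) (simp_all add: price_def power2_eq_square field_simps)

lemma exists_max:
  fixes H :: "'l::finite \<Rightarrow> 'n::finite \<Rightarrow> real" and L :: "'n \<Rightarrow> real" and J :: "('n \<Rightarrow> real) \<Rightarrow> real"
  assumes L: "\<And>k. L k \<le> 0" and f: "\<And>e. f e \<ge> 0"
    and cont: "continuous_on UNIV (\<lambda>x::real^'n. J (\<lambda>k. x$k))"
  defines "R \<equiv> {r. (\<Sum>k\<in>UNIV. r k) = 0 \<and> (\<forall>e. \<bar>\<Sum>k\<in>UNIV. H e k * r k\<bar> \<le> f e) \<and> (\<forall>k. L k \<le> r k)}"
  shows "\<exists>r\<in>R. \<forall>r'\<in>R. J r' \<le> J r"
proof -
  define S where "S = {x::real^'n. (\<Sum>k\<in>UNIV. x$k) = 0 \<and> (\<forall>e. \<bar>\<Sum>k\<in>UNIV. H e k * x$k\<bar> \<le> f e) \<and> (\<forall>k. L k \<le> x$k)}"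
  define M where "M = (\<Sum>j\<in>UNIV. \<bar>L j\<bar>)"
  have comp: "\<bar>x$i\<bar> \<le> M" if "x \<in> S" for x i
  proof -
    have x: "(\<Sum>k\<in>UNIV. x$k) = 0" "\<And>k. L k \<le> x$k" using that by (auto simp: S_def)
    have "(\<Sum>k\<in>UNIV. x$k) = x$i + (\<Sum>k\<in>UNIV-{i}. x$k)" by (simp add: sum.remove)
    moreover have "(\<Sum>k\<in>UNIV-{i}. x$k) \<ge> (\<Sum>k\<in>UNIV-{i}. L k)" by (rule sum_mono) (simp add: x)
    moreover have "(\<Sum>k\<in>UNIV-{i}. L k) \<ge> - (\<Sum>k\<in>UNIV-{i}. \<bar>L k\<bar>)"
      by (simp add: sum_negf[symmetric] sum_mono)
    moreover have "(\<Sum>k\<in>UNIV-{i}. \<bar>L k\<bar>) \<le> M" unfolding M_def by (rule sum_mono2) auto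
    moreover have "\<bar>L i\<bar> \<le> M" unfolding M_def by (rule member_le_sum) auto
    ultimately show ?thesis using x(1) x(2)[of i] by linarith
  qed
  have "bounded S"
    unfolding bounded_iff
  proof (intro exI ballI)
    fix x assume "x \<in> S"
    have "norm x \<le> (\<Sum>i\<in>UNIV. \<bar>x$i\<bar>)" by (rule norm_le_l1_cart)
    also have "\<dots> \<le> (\<Sum>i\<in>(UNIV::'n set). M)" by (rule sum_mono) (rule comp[OF \<open>x\<in>S\<close>])
    finally show "norm x \<le> (\<Sum>i\<in>(UNIV::'n set). M)" .
  qed
  moreover have "closed S"
    unfolding S_def
    by (intro closed_Collect_conj closed_Collect_all closed_Collect_eq closed_Collect_le continuous_intros)
  ultimately have "compact S" by (simp add: compact_eq_bounded_closed)
  moreover have "0 \<in> S" using L f by (simp add: S_def)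
  ultimately obtain x where x: "x \<in> S" "\<And>y. y \<in> S \<Longrightarrow> J (\<lambda>k. y$k) \<le> J (\<lambda>k. x$k)"
    using continuous_attains_sup[of S "\<lambda>x. J (\<lambda>k. x$k)"] continuous_on_subset[OF cont]
    by blast
  show ?thesis
  proof (intro bexI ballI)
    show "(\<lambda>k. x$k) \<in> R" using x(1) by (simp add: S_def R_def)
    fix r' assume "r' \<in> R"
    then have "(\<chi> k. r' k) \<in> S" by (simp add: S_def R_def)
    from x(2)[OF this] show "J r' \<le> J (\<lambda>k. x$k)" by simp
  qed
qed

definition qf :: "('n \<Rightarrow> real) \<Rightarrow> ('n \<Rightarrow> real) \<Rightarrow> ('n \<Rightarrow> real) \<Rightarrow> ('n \<Rightarrow> real) \<Rightarrow> 'n \<Rightarrow> real" where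
  "qf a b c r k = max 0 ((a k - b k * r k) / (2 * (b k + c k)))"

lemma GNE_exists:
  fixes H :: "'l::finite \<Rightarrow> 'n::finite \<Rightarrow> real"
  assumes f: "\<And>e. f e \<ge> 0" and a: "\<And>k. a k > 0" and b: "\<And>k. b k \<ge> 0" and c: "\<And>k. c k > 0"
    and W: "W = Wsoc \<or> W = Wres"
  shows "\<exists>q r. is_GNE H f a b c W q r"
proof -
  define L where "L k = - a k / (b k + 2 * c k)" for k
  define R where "R = {r. (\<Sum>k\<in>UNIV. r k) = 0 \<and> (\<forall>e. \<bar>\<Sum>k\<in>UNIV. H e k * r k\<bar> \<le> f e) \<and> (\<forall>k. L k \<le> r k)}"
  have L0: "L k \<le> 0" for k using a[of k] b[of k] c[of k] by (simp add: L_def)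
  define V where "V r = (\<Sum>k\<in>UNIV. a k * r k - b k * (r k)^2/2)" for r :: "'n \<Rightarrow> real"
  define G where "G r = (\<Sum>k\<in>UNIV. qf a b c r k * (a k - b k * r k) - (b k + c k) * (qf a b c r k)^2)" for r
  define J where "J r = (if W = Wsoc then G r + V r else V r)" for r
  have bc2: "2 * b k + 2 * c k \<noteq> 0" for k using b[of k] c[of k] by linarith
  have cont: "continuous_on UNIV (\<lambda>x::real^'n. J (\<lambda>k. x$k))"
    unfolding J_def G_def V_def qf_def using bc2 by (cases "W = Wsoc") (auto intro!: continuous_intros continuous_on_max)
  have "\<exists>r\<in>R. \<forall>r'\<in>R. J r' \<le> J r" unfolding R_def
    by (rule exists_max) (use L0 f cont in auto)
  then obtain r where r: "r \<in> R" and rmax: "\<And>r'. r' \<in> R \<Longrightarrow> J r' \<le> J r"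
    by blast
  define q where "q = qf a b c r"
  have rL: "L k \<le> r k" for k using r by (simp add: R_def)
  have bnd: "0 \<le> q k + r k" "q k \<le> - L k" for k
    using bounds[OF a[of k] b[of k] c[of k], of "r k"] rL[of k]
    by (simp_all add: q_def qf_def L_def)
  have q0: "q k \<ge> 0" for k by (simp add: q_def qf_def)
  have rSM: "r \<in> SM H f q" using r bnd by (simp add: SM_def R_def)
  have SMR: "r' \<in> R" if "r' \<in> SM H f q" for r'
  proof -
    have "L k \<le> r' k" for k using that bnd[of k] by (simp add: SM_def) (smt (verit))
    then show ?thesis using that by (simp add: SM_def R_def)
  qed
  have bc: "b k + c k > 0" for k using b[of k] c[of k] by (simp add: add_nonneg_pos)
  have gen: "piG a b c (q(k := x)) r k \<le> piG a b c q r k" if "x \<ge> 0" for k x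
    unfolding piG_eq using quad[OF bc[of k] that, of "a k - b k * r k"]
    by (simp add: q_def qf_def)
  have Gle: "(\<Sum>k\<in>UNIV. q' k * (a k - b k * r' k) - (b k + c k) * (q' k)^2) \<le> G r'"
    if "\<And>k. q' k \<ge> 0" for q' r'
    unfolding G_def qf_def by (rule sum_mono) (rule quad[OF bc that])
  have Gq: "G r = (\<Sum>k\<in>UNIV. q k * (a k - b k * r k) - (b k + c k) * (q k)^2)"
    by (simp add: G_def q_def)
  have mm: "piM W a b c q r' \<le> piM W a b c q r" if "r' \<in> SM H f q" for r'
  proof -
    define C where "C = (\<Sum>k\<in>UNIV. b k * (q k)^2/2)"
    have r'R: "r' \<in> R" using SMR[OF that] .
    show ?thesis
    proof (cases "W = Wsoc")
      case True
      have "piM W a b c q r' = (\<Sum>k\<in>UNIV. q k * (a k - b k * r' k) - (b k + c k) * (q k)^2) + V r' + C"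
        unfolding True piM_soc V_def C_def by (simp add: sum.distrib)
      also have "\<dots> \<le> G r' + V r' + C" using Gle[of q r'] q0 by simp
      also have "\<dots> = J r' + C" using True by (simp add: J_def)
      also have "\<dots> \<le> J r + C" using rmax[OF r'R] by simp
      also have "\<dots> = piM W a b c q r"
        unfolding True piM_soc V_def C_def J_def Gq by (simp add: sum.distrib)
      finally show ?thesis .
    next
      case False
      then have Wr: "W = Wres" using W by simp
      have "piM W a b c q r' = V r' + C"
        unfolding Wr piM_res V_def C_def by (simp add: sum.distrib)
      also have "\<dots> = J r' + C" using False by (simp add: J_def)
      also have "\<dots> \<le> J r + C" using rmax[OF r'R] by simp
      also have "\<dots> = piM W a b c q r"
        using False unfolding Wr piM_res V_def C_def J_def by (simp add: sum.distrib)
      finally show ?thesis .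
    qed
  qed
  have "is_GNE H f a b c W q r"
    unfolding is_GNE_def using q0 rSM gen mm by blast
  then show ?thesis by blast
qed

lemma ex_nc: "network_connected (\<lambda>e::1. 0::2) (\<lambda>e::1. 1::2)"
    unfolding network_connected_def
  proof (intro allI)
    fix i j :: 2
    show "(\<lambda>x y. \<exists>e::1. (0 = x \<and> 1 = y) \<or> (0 = y \<and> 1 = x))\<^sup>*\<^sup>* i j"
    proof (cases "i = j")
      case True then show ?thesis by simp
    next
      case False
      have "(i = 0 \<and> j = 1) \<or> (i = 1 \<and> j = 0)" using False exhaust_2[of i] exhaust_2[of j] by (auto simp: two0)
      then show ?thesis by (auto intro!: r_into_rtranclp)
    qed
  qed

lemma ex_fl: "(\<Sum>k\<in>UNIV. (if k = 0 then 1 else 0) * dc_injection (\<lambda>e::1. 0::2) (\<lambda>e::1. 1::2) (\<lambda>e. 1) \<theta> k) =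
        dc_flow (\<lambda>e::1. 0::2) (\<lambda>e::1. 1::2) (\<lambda>e. 1) \<theta> e"
    by (simp add: sum2 sum_1 dc_injection_def dc_flow_def)

lemma ex_sfm: "shift_factor_matrix (\<lambda>(e::1) (k::2). if k = 0 then 1 else 0 :: real)"
  unfolding shift_factor_matrix_def
  apply (rule exI[of _ "\<lambda>e::1. 0::2"], rule exI[of _ "\<lambda>e::1. 1::2"], rule exI[of _ "\<lambda>e::1. 1::real"])
  using ex_nc ex_fl by simp

lemma no_GNE:
  "\<not> (\<exists>q r. is_GNE (\<lambda>(e::1) (k::2). if k = 0 then 1 else 0 :: real) (\<lambda>e::1. 2 :: real) (\<lambda>k::2. 10 :: real)
      (\<lambda>k::2. if k = 0 then 1.2 else 1 :: real) (\<lambda>k::2. 1 :: real) Wcon q r)"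
proof
  let ?H = "\<lambda>(e::1) (k::2). if k = 0 then 1 else 0 :: real"
  let ?f = "\<lambda>e::1. 2 :: real"
  let ?a = "\<lambda>k::2. 10 :: real"
  let ?b = "\<lambda>k::2. if k = 0 then 1.2 else 1 :: real"
  let ?c = "\<lambda>k::2. 1 :: real"
  assume "\<exists>q r. is_GNE ?H ?f ?a ?b ?c Wcon q r"
  then obtain q r where G: "is_GNE ?H ?f ?a ?b ?c Wcon q r" by blast
  have SMi: "r' \<in> SM ?H ?f q \<longleftrightarrow> q 0 + r' 0 \<ge> 0 \<and> q 1 + r' 1 \<ge> 0 \<and> \<bar>r' 0\<bar> \<le> 2 \<and> r' 0 + r' 1 = 0" for r'
    by (auto simp: SM_def sum2 forall_2 two0)
  have rS: "r \<in> SM ?H ?f q" using G by (simp add: is_GNE_def)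
  define p where "p = r 0"
  have r1: "r 1 = - p" and pb: "\<bar>p\<bar> \<le> 2" and d0: "q 0 + p \<ge> 0" and d1: "q 1 - p \<ge> 0"
    using rS unfolding SMi p_def by auto
  have gen: "piG ?a ?b ?c (q(k := x)) r k \<le> piG ?a ?b ?c q r k" if "x \<ge> 0" for k x
    using G that by (simp add: is_GNE_def)
  have mm: "piM Wcon ?a ?b ?c q r' \<le> piM Wcon ?a ?b ?c q r" if "r' \<in> SM ?H ?f q" for r'
    using G that by (simp add: is_GNE_def)
  define x0 where "x0 = (50 - 6*p)/22"
  have "x0 \<ge> 0" using pb by (simp add: x0_def)
  from gen[OF this, of 0] have "x0 * (10 - 6/5 * p) - 11/5 * x0^2 \<le> q 0 * (10 - 6/5 * p) - 11/5 * (q 0)^2"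
    by (simp add: piG_eq p_def)
  moreover have "x0 * (10 - 6/5 * p) - 11/5 * x0^2 - (q 0 * (10 - 6/5 * p) - 11/5 * (q 0)^2) = 11/5 * (q 0 - x0)^2"
    by (simp add: x0_def power2_eq_square field_simps)
  ultimately have "(q 0 - x0)^2 \<le> 0" by linarith
  then have q0: "q 0 = (50 - 6*p)/22" by (simp add: x0_def)
  define x1 where "x1 = (10 + p)/4"
  have "x1 \<ge> 0" using pb by (simp add: x1_def)
  from gen[OF this, of 1] have "x1 * (10 + p) - 2 * x1^2 \<le> q 1 * (10 + p) - 2 * (q 1)^2"
    by (simp add: piG_eq r1)
  moreover have "x1 * (10 + p) - 2 * x1^2 - (q 1 * (10 + p) - 2 * (q 1)^2) = 2 * (q 1 - x1)^2"
    by (simp add: x1_def power2_eq_square field_simps)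
  ultimately have "(q 1 - x1)^2 \<le> 0" by linarith
  then have q1: "q 1 = (10 + p)/4" by (simp add: x1_def)
  define g where "g y = 3/5 * (q 0 + y)^2 + 1/2 * (q 1 - y)^2" for y
  have gr: "piM Wcon ?a ?b ?c q (\<lambda>k. if k = 0 then y else - y) = g y" for y
    by (simp add: piM_con sum2 g_def)
  have "piM Wcon ?a ?b ?c q r = g p"
    using gr[of p] r1 by (simp add: piM_con sum2 g_def p_def)
  then have gopt: "g y \<le> g p" if "q 0 + y \<ge> 0" "q 1 - y \<ge> 0" "\<bar>y\<bar> \<le> 2" for y
    using mm[of "\<lambda>k. if k = 0 then y else - y"] that gr[of y] unfolding SMi by simp
  have gdiff: "10 * (g x - g y) = (x - y) * (11 * (x + y) + 12 * q 0 - 10 * q 1)" for x y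
    by (simp add: g_def power2_eq_square field_simps)
  define lo where "lo = max (- q 0) (-2)"
  have g2: "g 2 \<le> g p" by (rule gopt) (use q0 q1 pb in auto)
  have q0p: "q 0 \<ge> 0" and q1p: "q 1 \<ge> 2" using q0 q1 pb by auto
  have lo1: "lo \<ge> -2" "lo \<ge> - q 0" "lo \<le> 0" using q0p by (auto simp: lo_def)
  have glo: "g lo \<le> g p" by (rule gopt) (use lo1 q1p in auto)
  have plo: "lo \<le> p" "lo < 2" using d0 pb q0 by (auto simp: lo_def)
  consider "p = 2" | "p = lo" | "lo < p \<and> p < 2" using plo pb by linarith
  then show False
  proof cases
    case 1
    have "lo = -19/11" using 1 q0 by (simp add: lo_def)
    then show False using glo 1 q0 q1 by (simp add: g_def power2_eq_square)
  next
    case 2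
    show False
    proof (cases "q 0 \<le> 2")
      case True
      then have "p = - q 0" using 2 by (simp add: lo_def)
      moreover have "p \<ge> -2" using pb by arith
      moreover have "22 * q 0 = 50 - 6*p" using q0 by simp
      ultimately show False by linarith
    next
      case False
      then have "p = -2" using 2 by (simp add: lo_def)
      then show False using g2 q0 q1 by (simp add: g_def power2_eq_square)
    qed
  next
    case 3
    have A: "(p - 2) * (11 * (p + 2) + 12 * q 0 - 10 * q 1) \<ge> 0" proof -
      have "0 \<le> 10 * (g p - g 2)" using g2 by simp
      also have "\<dots> = (p - 2) * (11 * (p + 2) + 12 * q 0 - 10 * q 1)" by (rule gdiff)
      finally show ?thesis .
    qed
    have B: "(p - lo) * (11 * (p + lo) + 12 * q 0 - 10 * q 1) \<ge> 0" proof -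
      have "0 \<le> 10 * (g p - g lo)" using glo by simp
      also have "\<dots> = (p - lo) * (11 * (p + lo) + 12 * q 0 - 10 * q 1)" by (rule gdiff)
      finally show ?thesis .
    qed
    from A 3 have A': "11 * (p + 2) + 12 * q 0 - 10 * q 1 \<le> 0" by (simp add: zero_le_mult_iff)
    from B 3 have B': "11 * (p + lo) + 12 * q 0 - 10 * q 1 \<ge> 0" by (simp add: zero_le_mult_iff)
    from A' B' plo show False by (smt (verit))
  qed
qed

theorem theorem1:
  shows
  "(\<forall>(H :: 'l::finite \<Rightarrow> 'n::finite \<Rightarrow> real) f a b c.
      shift_factor_matrix H \<and> (\<forall>e. f e \<ge> 0) \<and> (\<forall>k. a k > 0) \<and> (\<forall>k. b k \<ge> 0) \<and> (\<forall>k. c k > 0)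
      \<and> game_feasible H f
      \<longrightarrow> (\<exists>q r. is_GNE H f a b c Wsoc q r) \<and> (\<exists>q r. is_GNE H f a b c Wres q r))
   \<and> (let H = (\<lambda>(e::1) (k::2). if k = 0 then 1 else 0 :: real);
          f = (\<lambda>e::1. 2 :: real);
          a = (\<lambda>k::2. 10 :: real);
          b = (\<lambda>k::2. if k = 0 then 1.2 else 1 :: real);
          c = (\<lambda>k::2. 1 :: real)
      in shift_factor_matrix H \<and> game_feasible H f \<and> \<not> (\<exists>q r. is_GNE H f a b c Wcon q r))"
proof (intro conjI allI impI)
  fix H :: "'l::finite \<Rightarrow> 'n::finite \<Rightarrow> real" and f :: "'l \<Rightarrow> real" and a b c :: "'n \<Rightarrow> real"
  assume A: "shift_factor_matrix H \<and> (\<forall>e. f e \<ge> 0) \<and> (\<forall>k. a k > 0) \<and> (\<forall>k. b k \<ge> 0) \<and> (\<forall>k. c k > 0)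
      \<and> game_feasible H f"
  show "\<exists>q r. is_GNE H f a b c Wsoc q r" by (rule GNE_exists) (use A in auto)
  show "\<exists>q r. is_GNE H f a b c Wres q r" by (rule GNE_exists) (use A in auto)
next
  have feas: "game_feasible (\<lambda>(e::1) (k::2). if k = 0 then 1 else 0 :: real) (\<lambda>e::1. 2 :: real)"
    unfolding game_feasible_def
    by (rule exI[of _ "\<lambda>k. 0"]) (auto simp: SM_def intro!: exI[of _ "\<lambda>k. 0"])
  show "let H = (\<lambda>(e::1) (k::2). if k = 0 then 1 else 0 :: real);
          f = (\<lambda>e::1. 2 :: real);
          a = (\<lambda>k::2. 10 :: real);
          b = (\<lambda>k::2. if k = 0 then 1.2 else 1 :: real);
          c = (\<lambda>k::2. 1 :: real)
      in shift_factor_matrix H \<and> game_feasible H f \<and> \<not> (\<exists>q r. is_GNE H f a b c Wcon q r)"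
    unfolding Let_def using ex_sfm feas no_GNE by blast
qed
end
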